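(* Let $h>0$, $n\in\mathbb{N}$, and let $\lambda:\mathbb{T}\to\mathbb{R}$ be an $n$-cycle with values $\lambda_0,\dots,\lambda_{n-1}\in\mathbb{R}\setminus\{\pm\tfrac1h\}$, such that $0<|e_{\lambda}(nh)|\neq1$ and $0<|e_{-\lambda}(nh)|\neq1$. Define for $t\in\mathbb{T}$ $$p(t)=-\lambda(t+2h),\quad q(t)=\Delta_h\lambda(t+h)-\lambda(t+h)\lambda(t+2h),$$ $$r(t)=\Delta_h^2\lambda(t)-\lambda(t+h)\Delta_h\lambda(t+h)-\bigl(\lambda(t+h)+\lambda(t+2h)\bigr)\Delta_h\lambda(t)+\lambda(t)\lambda(t+h)\lambda(t+2h).$$ Then the third-order equation $$\Delta_h^3y(t)+p(t)\Delta_h^2y(t)+q(t)\Delta_h y(t)+r(t)y(t)=0,\qquad t\in\mathbb{T},$$ has Hyers–Ulam stability on $\mathbb{T}$ with Hyers–Ulam stability constant $K=\bigl(K_0(\lambda)\bigr)^2K_0(-\lambda)$.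
   Context: Fix $h>0$ and let $\mathbb{T}=\{0,h,2h,3h,\dots\}$. For $x:\mathbb{T}\to\mathbb{R}$, $\Delta_h x(t)=\frac{x(t+h)-x(t)}{h}$ and $\Delta_h^2x=\Delta_h(\Delta_h x)$, $\Delta_h^3x=\Delta_h(\Delta_h^2 x)$. An $n$-cycle is a function $\mu:\mathbb{T}\to\mathbb{R}$ with $\mu(t)=\mu_k$ whenever $t/h\equiv k\pmod n$, $k\in\{0,\dots,n-1\}$, which has period $n$ and no smaller period. For such $\mu$ define the discrete exponential $e_\mu(t)=\prod_{k=0}^{t/h-1}(1+h\mu(kh))$ (empty product $=1$), so $e_\mu(nh)=\prod_{k=0}^{n-1}(1+h\mu_k)$. For $k\in\{0,\dots,n-1\}$ define $$S_k(\mu)=\sum_{j=1}^{n}\prod_{i=0}^{j-1}\frac{1}{|1+h\mu_{(k+i)\bmod n}|},$$ (e.g. $S_0(\mu)=\frac{1}{|1+h\mu_0|}+\frac{1}{|1+h\mu_0||1+h\mu_1|}+\dots+\frac{1}{|1+h\mu_0|\cdots|1+h\mu_{n-1}|}$), and, when $0<|e_\mu(nh)|\neq1$, $$K_0(\mu)=\frac{h|e_\mu(nh)|}{\bigl|1-|e_\mu(nh)|\bigr|}\max\{S_0(\mu),\dots,S_{n-1}(\mu)\}.$$ Here $-\lambda$ denotes the $n$-cycle with values $-\lambda_0,\dots,-\lambda_{n-1}$. Hyers–Ulam stability: an equation $\mathcal{L}[y](t)=f(t)$, $t\in\mathbb{T}$ (with $\mathcal{L}$ a linear difference operator) has Hyers–Ulam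 stability on $\mathbb{T}$ with Hyers–Ulam stability constant $K>0$ if for every $\varepsilon>0$ and every $\xi:\mathbb{T}\to\mathbb{R}$ with $|\mathcal{L}[\xi](t)-f(t)|\le\varepsilon$ for all $t\in\mathbb{T}$, there is a solution $y:\mathbb{T}\to\mathbb{R}$ of the equation with $|\xi(t)-y(t)|\le K\varepsilon$ for all $t\in\mathbb{T}$. The minimum Hyers–Ulam stability constant is the smallest such $K$. *)

theory Defs
  imports Complex_Main
begin

text \<open>The time scale T = {0, h, 2h, ...} is indexed by nat: the point t = k*h
  corresponds to index k. Functions on T are functions nat \<Rightarrow> real.\<close>

definition dlt :: "real \<Rightarrow> (nat \<Rightarrow> real) \<Rightarrow> nat \<Rightarrow> real" where
  "dlt h x k = (x (Suc k) - x k) / h"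

definition is_cycle :: "nat \<Rightarrow> (nat \<Rightarrow> real) \<Rightarrow> bool" where
  "is_cycle n \<mu> \<longleftrightarrow> n \<ge> 1 \<and> (\<forall>k. \<mu> (k + n) = \<mu> k) \<and>
     (\<forall>m. 0 < m \<and> m < n \<longrightarrow> \<not> (\<forall>k. \<mu> (k + m) = \<mu> k))"

definition dexp :: "real \<Rightarrow> (nat \<Rightarrow> real) \<Rightarrow> nat \<Rightarrow> real" where
  "dexp h \<mu> k = (\<Prod>i<k. 1 + h * \<mu> i)"

definition Sk :: "real \<Rightarrow> nat \<Rightarrow> (nat \<Rightarrow> real) \<Rightarrow> nat \<Rightarrow> real" where
  "Sk h n \<mu> k = (\<Sum>j=1..n. \<Prod>i<j. 1 / \<bar>1 + h * \<mu> ((k + i) mod n)\<bar>)"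

definition K0 :: "real \<Rightarrow> nat \<Rightarrow> (nat \<Rightarrow> real) \<Rightarrow> real" where
  "K0 h n \<mu> = h * \<bar>dexp h \<mu> n\<bar> / \<bar>1 - \<bar>dexp h \<mu> n\<bar>\<bar>
      * Max (Sk h n \<mu> ` {..<n})"

definition hu_stable :: "((nat \<Rightarrow> real) \<Rightarrow> nat \<Rightarrow> real) \<Rightarrow> (nat \<Rightarrow> real) \<Rightarrow> real \<Rightarrow> bool" where
  "hu_stable L f K \<longleftrightarrow> K > 0 \<and>
     (\<forall>\<epsilon>>0. \<forall>\<xi>. (\<forall>t. \<bar>L \<xi> t - f t\<bar> \<le> \<epsilon>) \<longrightarrow>
        (\<exists>y. (\<forall>t. L y t = f t) \<and> (\<forall>t. \<bar>\<xi> t - y t\<bar> \<le> K * \<epsilon>)))"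

end

theory Submission imports Defs begin

definition Pr :: "(nat \<Rightarrow> real) \<Rightarrow> nat \<Rightarrow> nat \<Rightarrow> real" where
  "Pr a k m = (\<Prod>i<m. a (k + i))"

lemma per_mult: fixes a :: "nat \<Rightarrow> 'b" and m :: nat assumes "\<And>k. a (k + n) = a k" shows "a (k + m * n) = a k"
proof (induction m)
  case (Suc m)
  have e: "k + Suc m * n = (k + m * n) + n" by simp
  show ?case unfolding e assms[of "k+m*n"] by (rule Suc)
qed simp

lemma per_mod: fixes a :: "nat \<Rightarrow> 'b" assumes "\<And>k. a (k + n) = a k" shows "a k = a (k mod n)"
  using per_mult[of a n "k mod n" "k div n", OF assms] by (simp add: mod_div_mult_eq)

lemma Pr_Suc: "Pr a k (Suc m) = Pr a k m * a (k + m)"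
  by (simp add: Pr_def)

lemma Pr_Suc_shift: "Pr a k (Suc m) = a k * Pr a (Suc k) m"
  unfolding Pr_def by (subst prod.lessThan_Suc_shift) simp

lemma Pr_add: "Pr a k (m + l) = Pr a k m * Pr a (k + m) l"
  by (induction l) (simp_all add: Pr_def add.assoc)

lemma Pr_period:
  assumes per: "\<And>k. a (k + n) = a k" and nz: "\<And>k. a k \<noteq> 0"
  shows "Pr a j n = Pr a 0 n"
proof (induction j)
  case (Suc j)
  have "Pr a j (Suc n) = a j * Pr a (Suc j) n" by (rule Pr_Suc_shift)
  moreover have "Pr a j (Suc n) = Pr a j n * a j" using per[of j] by (simp add: Pr_Suc add.commute)
  ultimately show ?case using Suc nz[of j] by (metis mult.commute mult_left_cancel)
qed simp

lemma Pr_per_shift: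
  assumes per: "\<And>k. a (k + n) = a k"
  shows "Pr a (k + m * n) j = Pr a k j"
proof -
  have "a (k + m * n + i) = a (k + i)" for i using per_mult[of a n "k+i" m, OF per] by (simp add: ac_simps)
  then show ?thesis unfolding Pr_def by simp
qed

lemma Pr_nz: "(\<And>k. a k \<noteq> 0) \<Longrightarrow> Pr a k m \<noteq> 0"
  by (simp add: Pr_def)

lemma sum_split_add: "sum (f::nat\<Rightarrow>real) {..<n + m} = sum f {..<n} + (\<Sum>i<m. f (i + n))"
  by (induction m) (simp_all add: ac_simps)

lemma blocksum:
  fixes f :: "nat \<Rightarrow> real"
  assumes n: "n \<ge> 1" and nn: "\<And>i. f i \<ge> 0" and rec: "\<And>i. f (i + n) = r * f i"
    and r: "0 \<le> r" "r < 1"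
  shows "summable f \<and> suminf f = (\<Sum>i<n. f i) / (1 - r)"
proof -
  define F where "F = (\<Sum>i<n. f i)"
  have F0: "F \<ge> 0" unfolding F_def by (simp add: nn sum_nonneg)
  have bnd: "sum f {..<N} \<le> F / (1 - r)" for N
  proof (induction N rule: less_induct)
    case (less N)
    show ?case
    proof (cases "N \<le> n")
      case True
      have "sum f {..<N} \<le> F" unfolding F_def
        by (rule sum_mono2) (use True nn in auto)
      also have "F \<le> F / (1 - r)" using F0 r by (simp add: le_divide_eq mult_left_le)
      finally show ?thesis .
    next
      case False
      then have N: "N = n + (N - n)" by simp
      have "sum f {..<N} = F + (\<Sum>i<N-n. f (i + n))"
        unfolding F_def by (subst N, subst sum_split_add) simp
      also have "\<dots> = F + r * sum f {..<N-n}" by (simp add: rec sum_distrib_left)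
      also have "\<dots> \<le> F + r * (F / (1 - r))"
        using less[of "N - n"] False n r by (intro add_left_mono mult_left_mono) auto
      also have "\<dots> = F / (1 - r)" using r by (simp add: field_simps)
      finally show ?thesis .
    qed
  qed
  have s: "summable f" by (rule summableI_nonneg_bounded[OF nn bnd])
  have "suminf f = (\<Sum>i. f (i + n)) + F" unfolding F_def by (rule suminf_split_initial_segment[OF s])
  also have "(\<Sum>i. f (i + n)) = r * suminf f" by (simp add: rec suminf_mult[OF s])
  finally have eq: "suminf f = r * suminf f + F" .
  have "suminf f * (1 - r) = suminf f - r * suminf f" by (simp add: algebra_simps)
  with eq have "suminf f * (1 - r) = F" by linarith
  then have "suminf f = F / (1 - r)" using r by (simp add: eq_divide_eq)
  then show ?thesis using s unfolding F_def by simp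
qed


lemma decay_case:
  fixes a x :: "nat \<Rightarrow> real" and \<delta> :: real
  assumes n: "n \<ge> 1" and per: "\<And>k. a (k+n) = a k" and nz: "\<And>k. a k \<noteq> 0"
    and E1: "\<bar>Pr a 0 n\<bar> < 1" and bd: "\<And>k. \<bar>x (Suc k) - a k * x k\<bar> \<le> \<delta>"
  shows "\<exists>y. (\<forall>k. y (Suc k) = a k * y k) \<and> (\<forall>k. \<bar>x k - y k\<bar> \<le> \<delta> * \<bar>Pr a 0 n\<bar> * (\<Sum>j<n. 1/\<bar>Pr a k (Suc j)\<bar>) / \<bar>1 - \<bar>Pr a 0 n\<bar>\<bar>)"
proof -
  define E where "E = \<bar>Pr a 0 n\<bar>"
  have Ek: "\<bar>Pr a k n\<bar> = E" for k unfolding E_def using Pr_period[of a n, OF per nz, where j=k] by simp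
  have d0: "\<delta> \<ge> 0" using bd[of 0] by linarith
  define R where "R k = (\<Sum>m<n. \<bar>Pr a (k+n-m) m\<bar>)" for k
  have R0: "R k \<ge> 0" for k unfolding R_def by (simp add: sum_nonneg)
  have Rrec: "\<bar>a k\<bar> * R k + 1 = R (Suc k) + E" for k
  proof -
    define hh where "hh m = \<bar>Pr a (Suc k + n - m) m\<bar>" for m
    have "\<bar>a k\<bar> * R k = (\<Sum>m<n. \<bar>Pr a (k+n-m) (Suc m)\<bar>)"
      unfolding R_def sum_distrib_left
    proof (rule sum.cong)
      fix m assume "m \<in> {..<n}"
      then have "k + n - m + m = k + n" by simp
      then show "\<bar>a k\<bar> * \<bar>Pr a (k + n - m) m\<bar> = \<bar>Pr a (k + n - m) (Suc m)\<bar>"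
        by (simp add: Pr_Suc per abs_mult)
    qed simp
    also have "\<dots> = (\<Sum>m<n. hh (Suc m))" unfolding hh_def by simp
    finally have "\<bar>a k\<bar> * R k + 1 = hh 0 + (\<Sum>m<n. hh (Suc m))" by (simp add: hh_def Pr_def)
    also have "\<dots> = (\<Sum>m<Suc n. hh m)" by (rule sum.lessThan_Suc_shift[symmetric])
    also have "\<dots> = R (Suc k) + E" by (simp add: hh_def R_def Ek)
    finally show ?thesis .
  qed
  have Req: "R k = E * (\<Sum>j<n. 1/\<bar>Pr a k (Suc j)\<bar>)" for k
  proof -
    have "R k = (\<Sum>j<n. \<bar>Pr a (k+n-(n - Suc j)) (n - Suc j)\<bar>)"
      unfolding R_def by (rule sum.nat_diff_reindex[symmetric])
    also have "\<dots> = (\<Sum>j<n. E * (1/\<bar>Pr a k (Suc j)\<bar>))"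
    proof (rule sum.cong)
      fix j assume "j \<in> {..<n}"
      then have j: "j < n" by simp
      then have e1: "k+n-(n - Suc j) = k + Suc j" and e2: "Suc j + (n - Suc j) = n" by auto
      have "Pr a k n = Pr a k (Suc j) * Pr a (k + Suc j) (n - Suc j)"
        using Pr_add[of a k "Suc j" "n - Suc j"] e2 by simp
      then have "E = \<bar>Pr a k (Suc j)\<bar> * \<bar>Pr a (k + Suc j) (n - Suc j)\<bar>" using Ek[of k] by (simp add: abs_mult)
      moreover have "Pr a k (Suc j) \<noteq> 0" by (rule Pr_nz[OF nz])
      ultimately show "\<bar>Pr a (k+n-(n - Suc j)) (n - Suc j)\<bar> = E * (1/\<bar>Pr a k (Suc j)\<bar>)"
        unfolding e1 by (simp add: field_simps)
    qed simp
    finally show ?thesis by (simp add: sum_distrib_left)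
  qed
  define y where "y k = x 0 * Pr a 0 k" for k
  have ys: "y (Suc k) = a k * y k" for k unfolding y_def by (simp add: Pr_Suc)
  have E1': "1 - E > 0" using E1 unfolding E_def by simp
  have main: "\<bar>x k - y k\<bar> \<le> \<delta> * R k / (1 - E)" for k
  proof (induction k)
    case 0 then show ?case using d0 R0[of 0] E1' by (simp add: y_def Pr_def)
  next
    case (Suc k)
    have "x (Suc k) - y (Suc k) = a k * (x k - y k) + (x (Suc k) - a k * x k)"
      by (simp add: ys algebra_simps)
    then have "\<bar>x (Suc k) - y (Suc k)\<bar> \<le> \<bar>a k\<bar> * \<bar>x k - y k\<bar> + \<delta>"
      using bd[of k] by (metis abs_mult abs_triangle_ineq add_mono order_trans order_refl)
    also have "\<dots> \<le> \<bar>a k\<bar> * (\<delta> * R k / (1 - E)) + \<delta>"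
      using Suc by (intro add_right_mono mult_left_mono) auto
    also have "\<dots> = \<delta> * (\<bar>a k\<bar> * R k + 1 - E) / (1 - E)" using E1' by (simp add: field_simps)
    also have "\<dots> = \<delta> * R (Suc k) / (1 - E)" using Rrec[of k] by simp
    finally show ?case .
  qed
  show ?thesis
  proof (intro exI conjI allI)
    fix k show "y (Suc k) = a k * y k" by (rule ys)
    show "\<bar>x k - y k\<bar> \<le> \<delta> * \<bar>Pr a 0 n\<bar> * (\<Sum>j<n. 1/\<bar>Pr a k (Suc j)\<bar>) / \<bar>1 - \<bar>Pr a 0 n\<bar>\<bar>"
      using main[of k] Req[of k] E1' unfolding E_def[symmetric] by (simp add: mult.assoc)
  qed
qed


lemma growth_case:
  fixes a x :: "nat \<Rightarrow> real" and \<delta> :: real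
  assumes n: "n \<ge> 1" and per: "\<And>k. a (k+n) = a k" and nz: "\<And>k. a k \<noteq> 0"
    and E1: "\<bar>Pr a 0 n\<bar> > 1" and bd: "\<And>k. \<bar>x (Suc k) - a k * x k\<bar> \<le> \<delta>"
  shows "\<exists>y. (\<forall>k. y (Suc k) = a k * y k) \<and> (\<forall>k. \<bar>x k - y k\<bar> \<le> \<delta> * \<bar>Pr a 0 n\<bar> * (\<Sum>j<n. 1/\<bar>Pr a k (Suc j)\<bar>) / \<bar>1 - \<bar>Pr a 0 n\<bar>\<bar>)"
proof -
  define E where "E = \<bar>Pr a 0 n\<bar>"
  have Ek: "\<bar>Pr a k n\<bar> = E" for k unfolding E_def using Pr_period[of a n, OF per nz, where j=k] by simp
  have d0: "\<delta> \<ge> 0" using bd[of 0] by linarith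
  have Epos: "E > 1" using E1 unfolding E_def .
  define f where "f k i = 1 / \<bar>Pr a k (Suc i)\<bar>" for k i
  have frec: "f k (i + n) = (1/E) * f k i" for k i
  proof -
    have "Pr a k (Suc (i + n)) = Pr a k (Suc i) * Pr a (k + Suc i) n"
      using Pr_add[of a k "Suc i" n] by simp
    then have "\<bar>Pr a k (Suc (i + n))\<bar> = \<bar>Pr a k (Suc i)\<bar> * E" using Ek by (simp add: abs_mult)
    then show ?thesis unfolding f_def by simp
  qed
  have fs: "summable (f k) \<and> suminf (f k) = (\<Sum>i<n. f k i) / (1 - 1/E)" for k
    by (rule blocksum[where f="f k" and r="1/E", OF n _ frec]) (use Epos in \<open>auto simp: f_def\<close>)
  define g where "g j = x (Suc j) - a j * x j" for j
  define u where "u k i = g (k + i) / Pr a k (Suc i)" for k i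
  have ub: "norm (u k i) \<le> \<delta> * f k i" for k i
    unfolding u_def f_def using bd[of "k+i"] Pr_nz[OF nz, where k=k and m="Suc i"]
    by (simp add: g_def abs_divide divide_right_mono)
  have us: "summable (u k)" for k
    by (rule summable_comparison_test[where g="\<lambda>i. \<delta> * f k i"]) (use ub fs in \<open>auto intro: summable_mult\<close>)
  have uas: "summable (\<lambda>i. \<bar>u k i\<bar>)" for k
    by (rule summable_comparison_test[where g="\<lambda>i. \<delta> * f k i"]) (use ub fs in \<open>auto intro: summable_mult\<close>)
  define z where "z k = suminf (u k)" for k
  have zb: "\<bar>z k\<bar> \<le> \<delta> * E * (\<Sum>j<n. 1/\<bar>Pr a k (Suc j)\<bar>) / \<bar>1 - E\<bar>" for k
  proof -
    have "\<bar>z k\<bar> \<le> (\<Sum>i. \<bar>u k i\<bar>)" unfolding z_def by (rule summable_rabs[OF uas])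
    also have "\<dots> \<le> (\<Sum>i. \<delta> * f k i)"
      by (rule suminf_le) (use ub uas fs in \<open>auto intro: summable_mult\<close>)
    also have "\<dots> = \<delta> * suminf (f k)" using fs by (simp add: suminf_mult)
    also have "\<dots> = \<delta> * ((\<Sum>i<n. f k i) / (1 - 1/E))" using fs by simp
    also have "\<dots> = \<delta> * E * (\<Sum>j<n. 1/\<bar>Pr a k (Suc j)\<bar>) / \<bar>1 - E\<bar>"
      using Epos unfolding f_def by (simp add: field_simps)
    finally show ?thesis .
  qed
  have zrec: "a k * z k = g k + z (Suc k)" for k
  proof -
    have "(\<Sum>i. u k (Suc i)) = suminf (u k) - u k 0" by (rule suminf_split_head[OF us])
    moreover have "u k (Suc i) = u (Suc k) i / a k" for i
      unfolding u_def using Pr_Suc_shift[of a k "Suc i"] by simp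
    then have "(\<Sum>i. u k (Suc i)) = z (Suc k) / a k"
      unfolding z_def by (simp add: suminf_divide[OF us])
    moreover have "u k 0 = g k / a k" unfolding u_def by (simp add: Pr_def)
    ultimately have "z k = g k / a k + z (Suc k) / a k" unfolding z_def by simp
    then show ?thesis using nz[of k] by (simp add: field_simps)
  qed
  define y where "y k = x k + z k" for k
  show ?thesis
  proof (intro exI conjI allI)
    fix k
    show "y (Suc k) = a k * y k" using zrec[of k] unfolding y_def g_def by (simp add: algebra_simps)
    show "\<bar>x k - y k\<bar> \<le> \<delta> * \<bar>Pr a 0 n\<bar> * (\<Sum>j<n. 1/\<bar>Pr a k (Suc j)\<bar>) / \<bar>1 - \<bar>Pr a 0 n\<bar>\<bar>"
      using zb[of k] unfolding y_def E_def by simp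
  qed
qed


definition Dop :: "real \<Rightarrow> (nat \<Rightarrow> real) \<Rightarrow> (nat \<Rightarrow> real) \<Rightarrow> nat \<Rightarrow> real" where
 "Dop h \<mu> y k = dlt h y k - \<mu> k * y k"

primrec psol :: "(nat \<Rightarrow> real) \<Rightarrow> (nat \<Rightarrow> real) \<Rightarrow> nat \<Rightarrow> real" where
  "psol a b 0 = 0" | "psol a b (Suc k) = a k * psol a b k + b k"

lemma sum_1n_shift: "(\<Sum>j=Suc 0..n. F j) = (\<Sum>j<n. F (Suc j) :: real)"
  by (induction n) (simp_all add: sum.cl_ivl_Suc)

lemma Sk_eq:
  assumes n: "n \<ge> 1" and per: "\<And>k. \<mu> (k + n) = \<mu> k"
  shows "Sk h n \<mu> (k mod n) = (\<Sum>j<n. 1/\<bar>Pr (\<lambda>k. 1 + h * \<mu> k) k (Suc j)\<bar>)"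
proof -
  have m: "\<mu> ((k mod n + i) mod n) = \<mu> (k + i)" for i
    using per_mod[of \<mu> n "k+i", OF per] by (simp add: mod_add_left_eq)
  have "Sk h n \<mu> (k mod n) = (\<Sum>j=1..n. 1/\<bar>Pr (\<lambda>k. 1 + h * \<mu> k) k j\<bar>)"
    unfolding Sk_def Pr_def m by (simp add: abs_prod prod_dividef)
  then show ?thesis by (simp add: sum_1n_shift)
qed

lemma Sk_le_Max:
  assumes n: "n \<ge> 1" and per: "\<And>k. \<mu> (k + n) = \<mu> k"
  shows "(\<Sum>j<n. 1/\<bar>Pr (\<lambda>k. 1 + h * \<mu> k) k (Suc j)\<bar>) \<le> Max (Sk h n \<mu> ` {..<n})"
proof -
  have "k mod n < n" using n by simp
  then show ?thesis unfolding Sk_eq[where n=n and \<mu>=\<mu>, OF n per, symmetric] by (intro Max_ge) auto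
qed

lemma dexp_Pr: "dexp h \<mu> n = Pr (\<lambda>k. 1 + h * \<mu> k) 0 n"
  by (simp add: dexp_def Pr_def)

lemma fo_hu:
  fixes \<mu> \<xi> f :: "nat \<Rightarrow> real"
  assumes h: "h > 0" and n: "n \<ge> 1" and per: "\<And>k. \<mu> (k + n) = \<mu> k"
    and nz: "\<And>k. 1 + h * \<mu> k \<noteq> 0" and E: "\<bar>dexp h \<mu> n\<bar> \<noteq> 1"
    and bd: "\<And>k. \<bar>Dop h \<mu> \<xi> k - f k\<bar> \<le> \<epsilon>"
  shows "\<exists>y. (\<forall>k. Dop h \<mu> y k = f k) \<and> (\<forall>k. \<bar>\<xi> k - y k\<bar> \<le> K0 h n \<mu> * \<epsilon>)"
proof -
  define a where "a k = 1 + h * \<mu> k" for k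
  have pera: "a (k + n) = a k" for k unfolding a_def using per by simp
  have nza: "a k \<noteq> 0" for k unfolding a_def using nz by simp
  define w where "w = psol a (\<lambda>k. h * f k)"
  define x where "x k = \<xi> k - w k" for k
  have e0: "\<epsilon> \<ge> 0" using bd[of 0] by linarith
  have xb: "\<bar>x (Suc k) - a k * x k\<bar> \<le> h * \<epsilon>" for k
  proof -
    have "x (Suc k) - a k * x k = h * (Dop h \<mu> \<xi> k - f k)"
      unfolding x_def w_def a_def Dop_def dlt_def using h by (simp add: field_simps)
    then show ?thesis using bd[of k] h by (simp add: abs_mult)
  qed
  define E where "E = Pr a 0 n"
  have EE: "dexp h \<mu> n = E" unfolding E_def a_def by (simp add: dexp_Pr)
  have "\<exists>y. (\<forall>k. y (Suc k) = a k * y k) \<and> (\<forall>k. \<bar>x k - y k\<bar> \<le> h * \<epsilon> * \<bar>Pr a 0 n\<bar> * (\<Sum>j<n. 1/\<bar>Pr a k (Suc j)\<bar>) / \<bar>1 - \<bar>Pr a 0 n\<bar>\<bar>)"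
  proof (cases "\<bar>Pr a 0 n\<bar> < 1")
    case True then show ?thesis by (rule decay_case[OF n pera nza _ xb])
  next
    case False
    then have "\<bar>Pr a 0 n\<bar> > 1" using E EE unfolding E_def by linarith
    then show ?thesis by (rule growth_case[OF n pera nza _ xb])
  qed
  then obtain y0 where y0: "\<And>k. y0 (Suc k) = a k * y0 k"
    and y0b: "\<And>k. \<bar>x k - y0 k\<bar> \<le> h * \<epsilon> * \<bar>E\<bar> * (\<Sum>j<n. 1/\<bar>Pr a k (Suc j)\<bar>) / \<bar>1 - \<bar>E\<bar>\<bar>"
    unfolding E_def by blast
  define M where "M = Max (Sk h n \<mu> ` {..<n})"
  have SM: "(\<Sum>j<n. 1/\<bar>Pr a k (Suc j)\<bar>) \<le> M" for k
    unfolding M_def a_def by (rule Sk_le_Max[where n=n and \<mu>=\<mu>, OF n per])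
  have K0e: "K0 h n \<mu> = h * \<bar>E\<bar> / \<bar>1 - \<bar>E\<bar>\<bar> * M" unfolding K0_def M_def EE ..
  define y where "y k = w k + y0 k" for k
  show ?thesis
  proof (intro exI conjI allI)
    fix k
    show "Dop h \<mu> y k = f k"
      unfolding Dop_def dlt_def y_def w_def using y0[of k] h unfolding a_def by (simp add: field_simps)
    have "\<bar>\<xi> k - y k\<bar> = \<bar>x k - y0 k\<bar>" unfolding x_def y_def by simp
    also have "\<dots> \<le> (h * \<bar>E\<bar> / \<bar>1 - \<bar>E\<bar>\<bar> * \<epsilon>) * (\<Sum>j<n. 1/\<bar>Pr a k (Suc j)\<bar>)"
      using y0b[of k] by (simp add: field_simps)
    also have "\<dots> \<le> (h * \<bar>E\<bar> / \<bar>1 - \<bar>E\<bar>\<bar> * \<epsilon>) * M"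
      by (rule mult_left_mono[OF SM]) (use h e0 in simp)
    also have "\<dots> = K0 h n \<mu> * \<epsilon>" unfolding K0e by simp
    finally show "\<bar>\<xi> k - y k\<bar> \<le> K0 h n \<mu> * \<epsilon>" .
  qed
qed

lemma Sk_img:
  assumes n: "n \<ge> 1" and per: "\<And>k. \<mu> (k + n) = \<mu> k"
  shows "Sk h n \<mu> ` {..<n} = range (\<lambda>k. \<Sum>j<n. 1/\<bar>Pr (\<lambda>k. 1 + h * \<mu> k) k (Suc j)\<bar>)"
proof (intro equalityI subsetI)
  fix v assume "v \<in> Sk h n \<mu> ` {..<n}"
  then obtain j where j: "j < n" "v = Sk h n \<mu> j" by auto
  then have "v = Sk h n \<mu> (j mod n)" by simp
  then show "v \<in> range (\<lambda>k. \<Sum>j<n. 1/\<bar>Pr (\<lambda>k. 1 + h * \<mu> k) k (Suc j)\<bar>)"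
    unfolding Sk_eq[where n=n and \<mu>=\<mu>, OF n per] by blast
next
  fix v assume "v \<in> range (\<lambda>k. \<Sum>j<n. 1/\<bar>Pr (\<lambda>k. 1 + h * \<mu> k) k (Suc j)\<bar>)"
  then obtain k where "v = Sk h n \<mu> (k mod n)" unfolding Sk_eq[where n=n and \<mu>=\<mu>, OF n per] by blast
  moreover have "k mod n \<in> {..<n}" using n by simp
  ultimately show "v \<in> Sk h n \<mu> ` {..<n}" by blast
qed

lemma K0_shift:
  assumes n: "n \<ge> 1" and per: "\<And>k. \<mu> (k + n) = \<mu> k" and nz: "\<And>k. 1 + h * \<mu> k \<noteq> 0"
  shows "K0 h n (\<lambda>k. \<mu> (k + s)) = K0 h n \<mu>" and "dexp h (\<lambda>k. \<mu> (k + s)) n = dexp h \<mu> n"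
proof -
  define a where "a k = 1 + h * \<mu> k" for k
  have pera: "a (k + n) = a k" for k unfolding a_def using per by simp
  have nza: "a k \<noteq> 0" for k unfolding a_def using nz by simp
  have per': "\<mu> (k + n + s) = \<mu> (k + s)" for k using per[of "k+s"] by (simp add: ac_simps)
  have Pr_sh: "Pr (\<lambda>k. 1 + h * \<mu> (k + s)) k m = Pr a (k + s) m" for k m
    unfolding Pr_def a_def by (simp add: ac_simps)
  show de: "dexp h (\<lambda>k. \<mu> (k + s)) n = dexp h \<mu> n"
    unfolding dexp_Pr Pr_sh using Pr_period[where a=a and n=n and j=s, OF pera nza] unfolding a_def by simp
  define S where "S k = (\<Sum>j<n. 1/\<bar>Pr a k (Suc j)\<bar>)" for k
  have Sper: "S (k + s * n) = S k" for k unfolding S_def using Pr_per_shift[where a=a and n=n, OF pera] by simp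
  have "range (\<lambda>k. S (k + s)) = range S"
  proof (intro equalityI subsetI)
    fix v assume "v \<in> range S"
    then obtain k where "v = S k" by auto
    moreover have "s \<le> s * n" using n by simp
    then have "k + s * n = (k + s * n - s) + s" by arith
    ultimately have "v = S ((k + s * n - s) + s)" using Sper[of k] by metis
    then show "v \<in> range (\<lambda>k. S (k + s))" by blast
  qed auto
  then have "Sk h n (\<lambda>k. \<mu> (k + s)) ` {..<n} = Sk h n \<mu> ` {..<n}"
    unfolding Sk_img[where n=n and \<mu>=\<mu>, OF n per] Sk_img[where n=n and \<mu>="\<lambda>k. \<mu> (k + s)" and h=h, OF n per'] Pr_sh S_def a_def by simp
  then show "K0 h n (\<lambda>k. \<mu> (k + s)) = K0 h n \<mu>" unfolding K0_def de by simp
qed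

lemma K0_pos:
  assumes h: "h > 0" and n: "n \<ge> 1" and nz: "\<And>k. 1 + h * \<mu> k \<noteq> 0"
    and E: "0 < \<bar>dexp h \<mu> n\<bar>" "\<bar>dexp h \<mu> n\<bar> \<noteq> 1"
  shows "K0 h n \<mu> > 0"
proof -
  have "Sk h n \<mu> 0 > 0" unfolding Sk_def
    by (rule sum_pos) (use n nz in \<open>auto intro!: prod_pos\<close>)
  also have "Sk h n \<mu> 0 \<le> Max (Sk h n \<mu> ` {..<n})" using n by (intro Max_ge) auto
  finally show ?thesis unfolding K0_def using h E by simp
qed


theorem theorem5p5:
  fixes h :: real and n :: nat and lam p q r :: "nat \<Rightarrow> real"
  assumes hpos: "h > 0"
    and cyc: "is_cycle n lam"
    and nonsing: "\<And>k. lam k \<noteq> 1 / h \<and> lam k \<noteq> - 1 / h"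
    and e1: "0 < \<bar>dexp h lam n\<bar>" "\<bar>dexp h lam n\<bar> \<noteq> 1"
    and e2: "0 < \<bar>dexp h (\<lambda>k. - lam k) n\<bar>" "\<bar>dexp h (\<lambda>k. - lam k) n\<bar> \<noteq> 1"
    and p_def: "\<And>k. p k = - lam (k + 2)"
    and q_def: "\<And>k. q k = dlt h lam (k + 1) - lam (k + 1) * lam (k + 2)"
    and r_def: "\<And>k. r k = dlt h (dlt h lam) k - lam (k + 1) * dlt h lam (k + 1)
                  - (lam (k + 1) + lam (k + 2)) * dlt h lam k + lam k * lam (k + 1) * lam (k + 2)"
  shows "hu_stable
           (\<lambda>y k. dlt h (dlt h (dlt h y)) k + p k * dlt h (dlt h y) k + q k * dlt h y k + r k * y k)
           (\<lambda>k. 0)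
           ((K0 h n lam)\<^sup>2 * K0 h n (\<lambda>k. - lam k))"
proof -
  define L where "L = (\<lambda>y k. dlt h (dlt h (dlt h y)) k + p k * dlt h (dlt h y) k + q k * dlt h y k + r k * y k)"
  have n: "n \<ge> 1" and per: "\<And>k. lam (k + n) = lam k" using cyc unfolding is_cycle_def by auto
  have perm: "\<And>k. (\<lambda>k. - lam k) (k + n) = - lam k" using per by simp
  define c where "c = (\<lambda>k. lam (k + 2))"
  define b where "b = (\<lambda>k. lam (k + 1))"
  define a where "a = (\<lambda>k. - lam k)"
  have Lfac: "L y k = Dop h c (Dop h b (Dop h a y)) k" for y k
    unfolding L_def p_def q_def r_def a_def b_def c_def
    using hpos by (simp add: Dop_def dlt_def field_simps numeral_2_eq_2)
  have nz1: "1 + h * lam k \<noteq> 0" for k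
  proof
    assume "1 + h * lam k = 0"
    then have "lam k = - 1 / h" using hpos by (simp add: field_simps)
    then show False using nonsing[of k] by simp
  qed
  have nz2: "1 + h * (- lam k) \<noteq> 0" for k
  proof
    assume "1 + h * (- lam k) = 0"
    then have "lam k = 1 / h" using hpos by (simp add: field_simps)
    then show False using nonsing[of k] by simp
  qed
  have perc: "c (k + n) = c k" for k unfolding c_def using per[of "k+2"] by (simp add: ac_simps)
  have perb: "b (k + n) = b k" for k unfolding b_def using per[of "k+1"] by (simp add: ac_simps)
  have pera: "a (k + n) = a k" for k unfolding a_def using per by simp
  have Kc: "K0 h n c = K0 h n lam" and Ec: "dexp h c n = dexp h lam n"
    unfolding c_def using K0_shift[where \<mu>=lam and n=n and s=2, OF n per nz1] by auto
  have Kb: "K0 h n b = K0 h n lam" and Eb: "dexp h b n = dexp h lam n"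
    unfolding b_def using K0_shift[where \<mu>=lam and n=n and s=1, OF n per nz1] by auto
  have nzc: "1 + h * c k \<noteq> 0" for k unfolding c_def by (rule nz1)
  have nzb: "1 + h * b k \<noteq> 0" for k unfolding b_def by (rule nz1)
  have Kpos1: "K0 h n lam > 0" by (rule K0_pos[OF hpos n nz1 e1])
  have Kpos2: "K0 h n a > 0" unfolding a_def by (rule K0_pos[OF hpos n nz2 e2])
  show ?thesis
    unfolding hu_stable_def L_def[symmetric]
  proof (intro conjI allI impI)
    show "0 < (K0 h n lam)\<^sup>2 * K0 h n (\<lambda>k. - lam k)" using Kpos1 Kpos2 unfolding a_def by simp
    fix \<epsilon> :: real and \<xi> :: "nat \<Rightarrow> real"
    assume ep: "0 < \<epsilon>" and bd: "\<forall>t. \<bar>L \<xi> t - 0\<bar> \<le> \<epsilon>"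
    have "\<exists>y. (\<forall>k. Dop h c y k = 0) \<and> (\<forall>k. \<bar>Dop h b (Dop h a \<xi>) k - y k\<bar> \<le> K0 h n c * \<epsilon>)"
      by (rule fo_hu[where \<mu>=c and n=n, OF hpos n perc])
         (use nzc e1 bd Lfac in \<open>auto simp: Ec\<close>)
    then obtain y2 where y2: "\<And>k. Dop h c y2 k = 0"
      and y2b: "\<And>k. \<bar>Dop h b (Dop h a \<xi>) k - y2 k\<bar> \<le> K0 h n lam * \<epsilon>" unfolding Kc by blast
    have "\<exists>y. (\<forall>k. Dop h b y k = y2 k) \<and> (\<forall>k. \<bar>Dop h a \<xi> k - y k\<bar> \<le> K0 h n b * (K0 h n lam * \<epsilon>))"
      by (rule fo_hu[where \<mu>=b and n=n, OF hpos n perb])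
         (use nzb e1 y2b in \<open>auto simp: Eb\<close>)
    then obtain y1 where y1: "\<And>k. Dop h b y1 k = y2 k"
      and y1b: "\<And>k. \<bar>Dop h a \<xi> k - y1 k\<bar> \<le> K0 h n lam * (K0 h n lam * \<epsilon>)" unfolding Kb by blast
    have "\<exists>y. (\<forall>k. Dop h a y k = y1 k) \<and> (\<forall>k. \<bar>\<xi> k - y k\<bar> \<le> K0 h n a * (K0 h n lam * (K0 h n lam * \<epsilon>)))"
      by (rule fo_hu[where \<mu>=a and n=n, OF hpos n pera])
         (use nz2 e2 y1b in \<open>auto simp: a_def\<close>)
    then obtain y where y: "\<And>k. Dop h a y k = y1 k"
      and yb: "\<And>k. \<bar>\<xi> k - y k\<bar> \<le> K0 h n a * (K0 h n lam * (K0 h n lam * \<epsilon>))" by blast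
    have "Dop h a y = y1" using y by auto
    moreover have "Dop h b y1 = y2" using y1 by auto
    ultimately have Ly: "L y k = 0" for k unfolding Lfac using y2 by simp
    show "\<exists>y. (\<forall>t. L y t = 0) \<and> (\<forall>t. \<bar>\<xi> t - y t\<bar> \<le> (K0 h n lam)\<^sup>2 * K0 h n (\<lambda>k. - lam k) * \<epsilon>)"
    proof (intro exI conjI allI)
      fix t show "L y t = 0" by (rule Ly)
      show "\<bar>\<xi> t - y t\<bar> \<le> (K0 h n lam)\<^sup>2 * K0 h n (\<lambda>k. - lam k) * \<epsilon>"
        using yb[of t] unfolding a_def by (simp add: power2_eq_square ac_simps)
    qed
  qed
qed

end
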